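(* For every finite graph $G$: $G$ is a blue-red interval graph if and only if $G$ is a linear leaf power.
   Context: A leaf root of a graph $G$ is a pair $(T,\mathsf{w})$ where $T$ is a tree and $\mathsf{w}:E(T)\to[0,1]$ is a rational-valued edge-weight function, such that the vertices of $G$ are exactly the leaves of $T$ and for all distinct $u,v\in V(G)$, $uv\in E(G)$ iff $d_T(u,v)\le 1$, where $d_T(x,y)$ is the sum of the weights of the edges on the unique path of $T$ between $x$ and $y$. A caterpillar is a tree having a path that contains all nodes of degree at least $2$. A graph is a linear leaf power if it admits a leaf root $(T,\mathsf{w})$ with $T$ a caterpillar. A graph $G$ is a blue-red interval graph if there exist a bipartition $(B,R)$ of $V(G)$ and closed intervals $I_v\subseteq\mathbb{Q}$, $v\in V(G)$, such that $E(G)=\{b_1b_2 : b_1,b_2\in B,\ b_1\neq b_2,\ I_{b_1}\cap I_{b_2}\neq\emptyset\}\cup\{rb : r\in R,\ b\in B,\ I_r\subseteq I_b\}$ (in particular $R$ is an independent set). *)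

theory Defs
  imports Complex_Main
begin

definition simple_graph :: "'v set \<Rightarrow> 'v set set \<Rightarrow> bool" where
  "simple_graph V E \<longleftrightarrow>
     (\<forall>e\<in>E. \<exists>u v. u \<noteq> v \<and> u \<in> V \<and> v \<in> V \<and> e = {u, v})"

definition is_path :: "'v set \<Rightarrow> 'v set set \<Rightarrow> 'v list \<Rightarrow> bool" where
  "is_path N F xs \<longleftrightarrow> distinct xs \<and> set xs \<subseteq> N \<and>
     (\<forall>i. Suc i < length xs \<longrightarrow> {xs ! i, xs ! Suc i} \<in> F)"

definition connected_graph :: "'v set \<Rightarrow> 'v set set \<Rightarrow> bool" where
  "connected_graph N F \<longleftrightarrow>
     (\<forall>x\<in>N. \<forall>y\<in>N. \<exists>xs. is_path N F xs \<and> xs \<noteq> [] \<and> hd xs = x \<and> last xs = y)"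

definition acyclic_graph :: "'v set \<Rightarrow> 'v set set \<Rightarrow> bool" where
  "acyclic_graph N F \<longleftrightarrow>
     \<not> (\<exists>xs. 3 \<le> length xs \<and> is_path N F xs \<and> {last xs, hd xs} \<in> F)"

definition is_tree :: "'v set \<Rightarrow> 'v set set \<Rightarrow> bool" where
  "is_tree N F \<longleftrightarrow> finite N \<and> simple_graph N F \<and> connected_graph N F \<and> acyclic_graph N F"

definition degree :: "'v set set \<Rightarrow> 'v \<Rightarrow> nat" where
  "degree F x = card {e \<in> F. x \<in> e}"

text \<open>Leaves of a tree: nodes of degree at most 1 (degree 0 only occurs for the
one-node tree).\<close>
definition leaves :: "'v set \<Rightarrow> 'v set set \<Rightarrow> 'v set" where
  "leaves N F = {x \<in> N. degree F x \<le> 1}"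

definition caterpillar :: "'v set \<Rightarrow> 'v set set \<Rightarrow> bool" where
  "caterpillar N F \<longleftrightarrow> is_tree N F \<and>
     (\<exists>xs. is_path N F xs \<and> {x \<in> N. 2 \<le> degree F x} \<subseteq> set xs)"

definition path_weight :: "('v set \<Rightarrow> rat) \<Rightarrow> 'v list \<Rightarrow> rat" where
  "path_weight w xs = (\<Sum>i<length xs - 1. w {xs ! i, xs ! Suc i})"

definition tree_dist :: "'v set \<Rightarrow> 'v set set \<Rightarrow> ('v set \<Rightarrow> rat) \<Rightarrow> 'v \<Rightarrow> 'v \<Rightarrow> rat" where
  "tree_dist N F w x y =
     path_weight w (THE xs. is_path N F xs \<and> xs \<noteq> [] \<and> hd xs = x \<and> last xs = y)"

text \<open>Tree nodes are of type 'a + nat: the leaves are exactly the copies Inl v of the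
vertices of G; since trees are finite, this loses no generality.\<close>
definition leaf_root ::
  "'a set \<Rightarrow> 'a set set \<Rightarrow> ('a + nat) set \<Rightarrow> ('a + nat) set set \<Rightarrow> (('a + nat) set \<Rightarrow> rat) \<Rightarrow> bool" where
  "leaf_root V E N F w \<longleftrightarrow> is_tree N F \<and> leaves N F = Inl ` V \<and>
     (\<forall>e\<in>F. 0 \<le> w e \<and> w e \<le> 1) \<and>
     (\<forall>u\<in>V. \<forall>v\<in>V. u \<noteq> v \<longrightarrow> ({u, v} \<in> E \<longleftrightarrow> tree_dist N F w (Inl u) (Inl v) \<le> 1))"

definition linear_leaf_power :: "'a set \<Rightarrow> 'a set set \<Rightarrow> bool" where
  "linear_leaf_power V E \<longleftrightarrow> (\<exists>N F w. leaf_root V E N F w \<and> caterpillar N F)"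

text \<open>Vertex v gets the closed (nonempty) rational interval [lo v, hi v]; B is the blue
class, V - B the red class.\<close>
definition blue_red_interval :: "'a set \<Rightarrow> 'a set set \<Rightarrow> bool" where
  "blue_red_interval V E \<longleftrightarrow>
     (\<exists>B (lo :: 'a \<Rightarrow> rat) hi. B \<subseteq> V \<and> (\<forall>v\<in>V. lo v \<le> hi v) \<and>
        E = {{b1, b2} | b1 b2. b1 \<in> B \<and> b2 \<in> B \<and> b1 \<noteq> b2 \<and>
                               {lo b1..hi b1} \<inter> {lo b2..hi b2} \<noteq> {}}
          \<union> {{r, b} | r b. r \<in> V - B \<and> b \<in> B \<and> {lo r..hi r} \<subseteq> {lo b..hi b}})"

end

theory Submission
  imports Defs
begin


lemma is_path_Nil[simp]: "is_path N F []"
  by (simp add: is_path_def)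

lemma is_path_Cons:
  "is_path N F (x # zs) \<longleftrightarrow> x \<notin> set zs \<and> x \<in> N \<and> (zs \<noteq> [] \<longrightarrow> {x, hd zs} \<in> F) \<and> is_path N F zs"
proof -
  have "(\<forall>i. Suc i < length (x # zs) \<longrightarrow> {(x # zs) ! i, (x # zs) ! Suc i} \<in> F)
     \<longleftrightarrow> (zs \<noteq> [] \<longrightarrow> {x, hd zs} \<in> F) \<and> (\<forall>i. Suc i < length zs \<longrightarrow> {zs ! i, zs ! Suc i} \<in> F)"
    (is "?L \<longleftrightarrow> ?R")
  proof
    assume L: ?L
    show ?R
    proof
      show "zs \<noteq> [] \<longrightarrow> {x, hd zs} \<in> F" using spec[OF L, of 0] by (cases zs) auto
      show "\<forall>i. Suc i < length zs \<longrightarrow> {zs ! i, zs ! Suc i} \<in> F"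
      proof (intro allI impI)
        fix i assume "Suc i < length zs"
        then show "{zs ! i, zs ! Suc i} \<in> F" using spec[OF L, of "Suc i"] by simp
      qed
    qed
  next
    assume R: ?R
    show ?L
    proof (intro allI impI)
      fix i assume "Suc i < length (x # zs)"
      then show "{(x # zs) ! i, (x # zs) ! Suc i} \<in> F"
        using R by (cases i) (auto simp: hd_conv_nth)
    qed
  qed
  then show ?thesis by (auto simp: is_path_def)
qed

lemma is_path_single[simp]: "is_path N F [x] \<longleftrightarrow> x \<in> N"
  by (simp add: is_path_def)

lemma is_path_append:
  "is_path N F (xs @ ys) \<longleftrightarrow> is_path N F xs \<and> is_path N F ys \<and> set xs \<inter> set ys = {} \<and>
     (xs \<noteq> [] \<longrightarrow> ys \<noteq> [] \<longrightarrow> {last xs, hd ys} \<in> F)"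
  by (induction xs) (auto simp: is_path_Cons)

lemma is_path_rev: "is_path N F (rev xs) \<longleftrightarrow> is_path N F xs"
proof (induction xs)
  case Nil
  then show ?case by simp
next
  case (Cons x xs)
  then show ?case by (auto simp: is_path_append is_path_Cons last_rev insert_commute)
qed

lemma pw_Nil[simp]: "path_weight w [] = 0"
  by (simp add: path_weight_def)

lemma pw_single[simp]: "path_weight w [x] = 0"
  by (simp add: path_weight_def)

lemma pw_Cons2[simp]: "path_weight w (x # y # zs) = w {x, y} + path_weight w (y # zs)"
proof -
  have "path_weight w (x # y # zs) = (\<Sum>i<Suc (length zs). w {(x # y # zs) ! i, (x # y # zs) ! Suc i})"
    by (simp add: path_weight_def)
  also have "\<dots> = w {x, y} + (\<Sum>i<length zs. w {(y # zs) ! i, (y # zs) ! Suc i})"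
    by (subst sum.lessThan_Suc_shift) simp
  finally show ?thesis by (simp add: path_weight_def)
qed

lemma pw_append:
  "xs \<noteq> [] \<Longrightarrow> ys \<noteq> [] \<Longrightarrow>
   path_weight w (xs @ ys) = path_weight w xs + w {last xs, hd ys} + path_weight w ys"
proof (induction xs)
  case Nil
  then show ?case by simp
next
  case (Cons x xs)
  show ?case
  proof (cases xs)
    case Nil
    then show ?thesis using Cons by (cases ys) auto
  next
    case (Cons y zs)
    then show ?thesis using Cons.IH Cons.prems by auto
  qed
qed

lemma pw_rev: "path_weight w (rev xs) = path_weight w xs"
proof (induction xs)
  case Nil
  then show ?case by simp
next
  case (Cons x xs)
  show ?case
  proof (cases "xs = []")
    case True
    then show ?thesis by simp
  next
    case False
    have "path_weight w (rev (x # xs)) = path_weight w (rev xs @ [x])" by simp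
    also have "\<dots> = path_weight w (rev xs) + w {hd xs, x}"
      using False by (simp add: pw_append last_rev)
    also have "\<dots> = path_weight w (x # xs)"
      using False Cons.IH by (cases xs) (auto simp: insert_commute)
    finally show ?thesis .
  qed
qed

lemma pw_nonneg:
  assumes "is_path N F xs" "\<forall>e\<in>F. 0 \<le> w e"
  shows "0 \<le> path_weight w xs"
  using assms
proof (induction xs)
  case Nil
  then show ?case by simp
next
  case (Cons x xs)
  then show ?case by (cases xs) (auto simp: is_path_Cons)
qed



lemma cycle_from_two:
  assumes pa: "is_path N F (a # X)" and pb: "is_path N F (a # Y)"
    and ne: "X \<noteq> []" "Y \<noteq> []" and hd: "hd X \<noteq> hd Y" and lst: "last X = last Y"
  shows "\<not> acyclic_graph N F"
proof -
  have "last X \<in> set Y" using lst ne by simp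
  then have "\<exists>x\<in>set X. x \<in> set Y" using ne by auto
  then obtain X1 c X2 where X: "X = X1 @ c # X2" and cY: "c \<in> set Y" and X1: "\<forall>y\<in>set X1. y \<notin> set Y"
    by (rule split_list_first_propE)
  obtain Y1 Y2 where Y: "Y = Y1 @ c # Y2" using split_list[OF cY] by blast
  from pa have a1: "a \<notin> set X" "a \<in> N" "{a, hd X} \<in> F" "is_path N F X" using ne by (auto simp: is_path_Cons)
  from pb have a2: "a \<notin> set Y" "{a, hd Y} \<in> F" "is_path N F Y" using ne by (auto simp: is_path_Cons)
  have pX1: "is_path N F (X1 @ [c])" using a1(4) unfolding X
    using is_path_append[of N F "X1 @ [c]" X2] by simp
  have pY1: "is_path N F (Y1 @ [c])" using a2(3) unfolding Y
    using is_path_append[of N F "Y1 @ [c]" Y2] by simp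
  have hX: "hd (X1 @ [c]) = hd X" using X by (cases X1) auto
  have P1: "is_path N F (a # X1 @ [c])"
    using a1 pX1 hX X by (auto simp: is_path_Cons)
  have P2: "is_path N F (rev Y1)" using pY1 by (simp add: is_path_rev is_path_append)
  have cY1: "c \<notin> set Y1" using pY1 by (simp add: is_path_append)
  have eY1: "Y1 \<noteq> [] \<Longrightarrow> {last Y1, c} \<in> F" using pY1 by (simp add: is_path_append)
  define C where "C = (a # X1 @ [c]) @ rev Y1"
  have pC: "is_path N F C"
    unfolding C_def is_path_append
    using P1 P2 a2(1) X1 cY1 eY1 Y by (auto simp: last_rev hd_rev insert_commute)
  have len: "3 \<le> length C"
  proof (rule ccontr)
    assume "\<not> 3 \<le> length C"
    then have "X1 = [] \<and> Y1 = []" unfolding C_def by (auto simp: le_simps)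
    then show False using hd X Y by simp
  qed
  have "last C = hd Y" unfolding C_def using Y by (cases "Y1 = []") (auto simp: last_rev)
  then have cl: "{last C, hd C} \<in> F" using a2(2) by (simp add: C_def insert_commute)
  show ?thesis unfolding acyclic_graph_def using pC len cl by blast
qed

lemma path_unique:
  assumes "acyclic_graph N F"
  shows "is_path N F xs \<Longrightarrow> is_path N F ys \<Longrightarrow> xs \<noteq> [] \<Longrightarrow> ys \<noteq> [] \<Longrightarrow> hd xs = hd ys
    \<Longrightarrow> last xs = last ys \<Longrightarrow> xs = ys"
proof (induction xs arbitrary: ys)
  case Nil
  then show ?case by simp
next
  case (Cons a xs')
  obtain ys' where ys: "ys = a # ys'" using Cons.prems by (cases ys) auto
  show ?case
  proof (cases "xs' = []")
    case True
    then have "ys' = []" using Cons.prems ys by (cases "ys' = []") (auto simp: is_path_Cons)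
    then show ?thesis using True ys by simp
  next
    case False
    then have ne: "ys' \<noteq> []" using Cons.prems ys by (cases "ys' = []") (auto simp: is_path_Cons)
    show ?thesis
    proof (cases "hd xs' = hd ys'")
      case True
      have "xs' = ys'"
        using Cons.IH[of ys'] Cons.prems ys False ne True by (auto simp: is_path_Cons)
      then show ?thesis using ys by simp
    next
      case hne: False
      have "\<not> acyclic_graph N F"
        using cycle_from_two[of N F a xs' ys'] Cons.prems ys False ne hne by auto
      then show ?thesis using assms by simp
    qed
  qed
qed

lemma tree_dist_eq:
  assumes "acyclic_graph N F" "is_path N F P" "P \<noteq> []"
  shows "tree_dist N F w (hd P) (last P) = path_weight w P"
proof -
  have "(THE xs. is_path N F xs \<and> xs \<noteq> [] \<and> hd xs = hd P \<and> last xs = last P) = P"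
    using assms path_unique[OF assms(1)] by (intro the_equality) auto
  then show ?thesis by (simp add: tree_dist_def)
qed

lemma degree_ge2:
  assumes "finite F" "{z, y1} \<in> F" "{z, y2} \<in> F" "y1 \<noteq> y2"
  shows "2 \<le> degree F z"
proof -
  have "{z, y1} \<noteq> {z, y2}" using assms(4) by (auto simp: doubleton_eq_iff)
  then have "card {{z, y1}, {z, y2}} = 2" by simp
  moreover have "{{z, y1}, {z, y2}} \<subseteq> {e\<in>F. z \<in> e}" using assms by auto
  moreover have "finite {e\<in>F. z \<in> e}" using assms(1) by simp
  ultimately show ?thesis unfolding degree_def by (metis card_mono)
qed

lemma finite_edges:
  assumes "simple_graph N F" "finite N" shows "finite F"
proof -
  have "F \<subseteq> Pow N" using assms(1) by (auto simp: simple_graph_def)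
  then show ?thesis using assms(2) by (meson finite_Pow_iff rev_finite_subset)
qed

lemma attach:
  assumes T: "is_tree N F" and S: "is_path N F S" "S \<noteq> []"
    and D: "{x\<in>N. 2 \<le> degree F x} \<subseteq> set S" and z: "z \<in> N" "z \<notin> set S"
  shows "\<exists>y\<in>set S. {z, y} \<in> F"
proof -
  have fin: "finite F" using T finite_edges by (auto simp: is_tree_def)
  have "hd S \<in> N" using S by (auto simp: is_path_def)
  then obtain P where P: "is_path N F P" "P \<noteq> []" "hd P = z" "last P = hd S"
    using T z unfolding is_tree_def connected_graph_def by blast
  have "\<exists>x\<in>set P. x \<in> set S" using P S by (metis last_in_set list.set_sel(1))
  then obtain P1 c P2 where P': "P = P1 @ c # P2" and cS: "c \<in> set S" and P1: "\<forall>y\<in>set P1. y \<notin> set S"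
    by (rule split_list_first_propE)
  obtain Q where Q: "P1 = z # Q"
    using P P' z cS by (cases P1) auto
  show ?thesis
  proof (cases Q)
    case Nil
    then have "{z, c} \<in> F" using P(1) P' Q by (simp add: is_path_Cons)
    then show ?thesis using cS by blast
  next
    case (Cons u Q')
    have pp: "is_path N F (z # u # (Q' @ c # P2))" using P(1) P' Q Cons by simp
    then have e1: "{z, u} \<in> F" and e2: "{u, hd (Q' @ c # P2)} \<in> F" and uN: "u \<in> N"
      and dz: "z \<notin> set (u # (Q' @ c # P2))"
      by (auto simp: is_path_Cons)
    have "hd (Q' @ c # P2) \<in> set (Q' @ c # P2)" by (cases Q') auto
    then have "z \<noteq> hd (Q' @ c # P2)" using dz by auto
    then have "2 \<le> degree F u" using degree_ge2[OF fin, of u z "hd (Q' @ c # P2)"] e1 e2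
      by (auto simp: insert_commute)
    then have "u \<in> set S" using D uN by auto
    moreover have "u \<notin> set S" using P1 Q Cons by auto
    ultimately show ?thesis by simp
  qed
qed

definition cyc :: "'v set \<Rightarrow> 'v set set \<Rightarrow> 'v list \<Rightarrow> bool" where
  "cyc N F xs \<longleftrightarrow> 3 \<le> length xs \<and> is_path N F xs \<and> {last xs, hd xs} \<in> F"

lemma cyc_rotate1: "cyc N F xs \<Longrightarrow> cyc N F (rotate1 xs)"
proof -
  assume c: "cyc N F xs"
  then obtain x xs' where xs: "xs = x # xs'"
    unfolding cyc_def by (cases xs) auto
  have ne: "xs' \<noteq> []" using c xs by (auto simp: cyc_def)
  have p: "is_path N F (x # xs')" "{last xs', x} \<in> F" using c xs ne by (auto simp: cyc_def)
  have "is_path N F (xs' @ [x])" using p ne by (auto simp: is_path_append is_path_Cons)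
  moreover have "{x, hd xs'} \<in> F" using p ne by (auto simp: is_path_Cons)
  ultimately show ?thesis using c xs ne by (auto simp: cyc_def insert_commute)
qed

lemma cyc_rotate: "cyc N F xs \<Longrightarrow> cyc N F (rotate k xs)"
  by (induction k) (auto intro: cyc_rotate1)

lemma acyclic_by_height:
  fixes h :: "'v \<Rightarrow> nat"
  assumes H: "\<And>z y1 y2. {z, y1} \<in> F \<Longrightarrow> {z, y2} \<in> F \<Longrightarrow> h y1 \<le> h z \<Longrightarrow> h y2 \<le> h z \<Longrightarrow> y1 = y2"
  shows "acyclic_graph N F"
proof (rule ccontr)
  assume "\<not> acyclic_graph N F"
  then obtain xs where c: "cyc N F xs" unfolding acyclic_graph_def cyc_def by blast
  define L where "L = length xs"
  have L3: "3 \<le> L" using c by (simp add: cyc_def L_def)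
  define M where "M = Max (h ` set xs)"
  have "M \<in> h ` set xs" unfolding M_def using L3 L_def by (intro Max_in) auto
  then obtain m where m: "m \<in> set xs" "h m = M" by auto
  have hle: "\<And>y. y \<in> set xs \<Longrightarrow> h y \<le> h m" using m unfolding M_def by simp
  obtain t where t: "t < L" "xs ! t = m" using m(1) by (auto simp: in_set_conv_nth L_def)
  define ys where "ys = rotate (t + L - 1) xs"
  have cy: "cyc N F ys" unfolding ys_def by (rule cyc_rotate[OF c])
  have ly: "length ys = L" by (simp add: ys_def L_def)
  have "ys ! 1 = xs ! ((t + L - 1 + 1) mod L)"
    unfolding ys_def using L3 by (simp add: nth_rotate L_def)
  also have "(t + L - 1 + 1) mod L = t" using L3 t by simp
  finally have y1: "ys ! 1 = m" using t by simp
  obtain a r1 where ys1: "ys = a # r1" using ly L3 by (cases ys) auto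
  obtain b' r2 where ys2: "r1 = b' # r2" using ly L3 ys1 by (cases r1) auto
  obtain b r where ys3: "r2 = b # r" using ly L3 ys1 ys2 by (cases r2) auto
  have ys: "ys = a # m # b # r" using ys1 ys2 ys3 y1 by simp
  have sy: "set ys = set xs" by (simp add: ys_def)
  have pth: "is_path N F (a # m # b # r)" using cy ys by (simp add: cyc_def)
  then have "{a, m} \<in> F" "{m, b} \<in> F" "a \<noteq> b" by (auto simp: is_path_Cons)
  moreover have "h a \<le> h m" "h b \<le> h m" using hle sy ys by auto
  ultimately show False using H[of m a b] by (auto simp: insert_commute)
qed



lemma is_path_take: "is_path N F xs \<Longrightarrow> is_path N F (take k xs)"
  using is_path_append[of N F "take k xs" "drop k xs"] by simp

lemma is_path_drop: "is_path N F xs \<Longrightarrow> is_path N F (drop k xs)"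
  using is_path_append[of N F "take k xs" "drop k xs"] by simp

definition pos :: "'v list \<Rightarrow> ('v set \<Rightarrow> rat) \<Rightarrow> nat \<Rightarrow> rat" where
  "pos S w k = path_weight w (take (Suc k) S)"

definition seg :: "'v list \<Rightarrow> nat \<Rightarrow> nat \<Rightarrow> 'v list" where
  "seg S i j = drop i (take (Suc j) S)"

lemma seg_facts:
  assumes "i \<le> j" "j < length S"
  shows "seg S i j \<noteq> []" "hd (seg S i j) = S ! i" "last (seg S i j) = S ! j"
    "set (seg S i j) \<subseteq> set S"
proof -
  show "seg S i j \<noteq> []" using assms by (simp add: seg_def)
  show "hd (seg S i j) = S ! i" using assms by (simp add: seg_def hd_drop_conv_nth)
  have "length (seg S i j) = Suc j - i" using assms by (simp add: seg_def)
  then show "last (seg S i j) = S ! j" using assms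
    by (simp add: seg_def last_conv_nth)
  show "set (seg S i j) \<subseteq> set S" unfolding seg_def
    by (meson in_set_dropD in_set_takeD subsetI)
qed

lemma seg_path: "is_path N F S \<Longrightarrow> is_path N F (seg S i j)"
  unfolding seg_def by (intro is_path_drop is_path_take)

lemma pos_0: "S \<noteq> [] \<Longrightarrow> pos S w 0 = 0"
  by (cases S) (auto simp: pos_def)

lemma pw_seg:
  assumes "i \<le> j" "j < length S"
  shows "path_weight w (seg S i j) = pos S w j - pos S w i"
proof (cases i)
  case 0
  then show ?thesis using assms by (cases S) (auto simp: seg_def pos_def)
next
  case (Suc k)
  have tk: "take (Suc j) S = take i S @ seg S i j"
    unfolding seg_def using assms
    by (metis append_take_drop_id le_SucI min.absorb1 take_take)
  have ne: "take i S \<noteq> []" using Suc assms by auto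
  have lt: "last (take i S) = S ! k" using Suc assms
    by (simp add: take_Suc_conv_app_nth)
  have "pos S w j = path_weight w (take i S) + w {S ! k, S ! i} + path_weight w (seg S i j)"
    unfolding pos_def tk using pw_append[OF ne seg_facts(1)[OF assms]] lt seg_facts(2)[OF assms]
    by simp
  moreover have "pos S w i = path_weight w (take i S) + w {S ! k, S ! i}"
    unfolding pos_def using assms ne lt
    by (simp add: take_Suc_conv_app_nth pw_append)
  ultimately show ?thesis by simp
qed

lemma spine_paths_le:
  fixes S :: "'v list" and ix :: "'v \<Rightarrow> nat"
  assumes S: "is_path N F S" and W: "\<forall>e\<in>F. 0 \<le> w e"
    and IX: "\<forall>p\<in>N. ix p < length S \<and> (p \<in> set S \<longrightarrow> S ! ix p = p) \<and> (p \<notin> set S \<longrightarrow> {p, S ! ix p} \<in> F)"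
    and pq: "p \<in> N" "q \<in> N" "p \<noteq> q" and le: "ix p \<le> ix q"
  shows "\<exists>P. is_path N F P \<and> P \<noteq> [] \<and> hd P = p \<and> last P = q \<and>
     path_weight w P = (if p \<in> set S then 0 else w {p, S ! ix p}) + (if q \<in> set S then 0 else w {q, S ! ix q})
        + \<bar>pos S w (ix p) - pos S w (ix q)\<bar>"
proof -
  define i where "i = ix p"
  define j where "j = ix q"
  have ij: "i \<le> j" "j < length S" using le IX pq by (auto simp: i_def j_def)
  define G where "G = seg S i j"
  note sf = seg_facts[OF ij, folded G_def]
  have pG: "is_path N F G" unfolding G_def by (rule seg_path[OF S])
  have wG: "path_weight w G = pos S w j - pos S w i" unfolding G_def by (rule pw_seg[OF ij])
  have "0 \<le> path_weight w G" using pw_nonneg[OF pG W] .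
  then have ab: "\<bar>pos S w i - pos S w j\<bar> = path_weight w G" using wG by simp
  have ep: "p \<notin> set S \<Longrightarrow> {p, S ! i} \<in> F" using IX pq by (auto simp: i_def)
  have eq: "q \<notin> set S \<Longrightarrow> {S ! j, q} \<in> F" using IX pq by (auto simp: j_def insert_commute)
  have sp: "p \<in> set S \<Longrightarrow> S ! i = p" using IX pq by (auto simp: i_def)
  have sq: "q \<in> set S \<Longrightarrow> S ! j = q" using IX pq by (auto simp: j_def)
  have wq: "w {S ! j, q} = w {q, S ! j}" by (simp add: insert_commute)
  show ?thesis
  proof (cases "p \<in> set S"; cases "q \<in> set S")
    assume a: "p \<in> set S" "q \<in> set S"
    show ?thesis
      by (rule exI[of _ G]) (use a pG sf ab sp sq in \<open>auto simp: i_def j_def\<close>)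
  next
    assume a: "p \<in> set S" "q \<notin> set S"
    have "is_path N F (G @ [q])" using a pG sf eq pq by (auto simp: is_path_append)
    moreover have "path_weight w (G @ [q]) = path_weight w G + w {q, S ! j}"
      using sf by (simp add: pw_append wq)
    ultimately show ?thesis
      by (intro exI[of _ "G @ [q]"]) (use a sf ab sp in \<open>auto simp: i_def j_def\<close>)
  next
    assume a: "p \<notin> set S" "q \<in> set S"
    have "is_path N F ([p] @ G)" using a pG sf ep pq by (auto simp: is_path_Cons)
    moreover have "path_weight w ([p] @ G) = w {p, S ! i} + path_weight w G"
      using sf by (cases G) auto
    ultimately show ?thesis
      by (intro exI[of _ "[p] @ G"]) (use a sf ab sq in \<open>auto simp: i_def j_def\<close>)
  next
    assume a: "p \<notin> set S" "q \<notin> set S"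
    have "is_path N F (G @ [q])" using a pG sf eq pq by (auto simp: is_path_append)
    then have "is_path N F ([p] @ G @ [q])" using a sf ep pq by (auto simp: is_path_Cons)
    moreover have "path_weight w ([p] @ G @ [q]) = w {p, S ! i} + path_weight w G + w {q, S ! j}"
      using sf pw_append[of "[p]" "G @ [q]" w] pw_append[of G "[q]" w] by (simp add: wq)
    ultimately show ?thesis
      by (intro exI[of _ "[p] @ G @ [q]"]) (use a sf ab in \<open>auto simp: i_def j_def\<close>)
  qed
qed

lemma spine_paths:
  fixes S :: "'v list" and ix :: "'v \<Rightarrow> nat"
  assumes S: "is_path N F S" and W: "\<forall>e\<in>F. 0 \<le> w e"
    and IX: "\<forall>p\<in>N. ix p < length S \<and> (p \<in> set S \<longrightarrow> S ! ix p = p) \<and> (p \<notin> set S \<longrightarrow> {p, S ! ix p} \<in> F)"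
    and pq: "p \<in> N" "q \<in> N" "p \<noteq> q"
  shows "\<exists>P. is_path N F P \<and> P \<noteq> [] \<and> hd P = p \<and> last P = q \<and>
     path_weight w P = (if p \<in> set S then 0 else w {p, S ! ix p}) + (if q \<in> set S then 0 else w {q, S ! ix q})
        + \<bar>pos S w (ix p) - pos S w (ix q)\<bar>"
proof (cases "ix p \<le> ix q")
  case True
  then show ?thesis using spine_paths_le[OF S W IX pq] by blast
next
  case False
  then obtain P where P: "is_path N F P" "P \<noteq> []" "hd P = q" "last P = p"
     "path_weight w P = (if q \<in> set S then 0 else w {q, S ! ix q}) + (if p \<in> set S then 0 else w {p, S ! ix p})
        + \<bar>pos S w (ix q) - pos S w (ix p)\<bar>"
    using spine_paths_le[OF S W IX pq(2) pq(1) _] pq(3) by force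
  show ?thesis
    by (rule exI[of _ "rev P"]) (use P in \<open>auto simp: is_path_rev pw_rev hd_rev last_rev\<close>)
qed



definition linrep :: "'a set \<Rightarrow> 'a set set \<Rightarrow> ('a \<Rightarrow> rat) \<Rightarrow> ('a \<Rightarrow> rat) \<Rightarrow> bool" where
  "linrep V E x l \<longleftrightarrow> (\<forall>u\<in>V. \<forall>v\<in>V. u \<noteq> v \<longrightarrow> ({u, v} \<in> E \<longleftrightarrow> l u + l v + \<bar>x u - x v\<bar> \<le> 1))"

lemma llp_linrep:
  assumes "linear_leaf_power V E"
  shows "\<exists>x l. linrep V E x l"
proof -
  obtain N F w where LR: "leaf_root V E N F w" and cat: "caterpillar N F"
    using assms unfolding linear_leaf_power_def by blast
  have T: "is_tree N F" and lv: "leaves N F = Inl ` V" and W: "\<forall>e\<in>F. 0 \<le> w e"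
    and D: "\<forall>u\<in>V. \<forall>v\<in>V. u \<noteq> v \<longrightarrow> ({u, v} \<in> E \<longleftrightarrow> tree_dist N F w (Inl u) (Inl v) \<le> 1)"
    using LR unfolding leaf_root_def by auto
  obtain S0 where S0: "is_path N F S0" "{x\<in>N. 2 \<le> degree F x} \<subseteq> set S0"
    using cat unfolding caterpillar_def by blast
  show ?thesis
  proof (cases "V = {}")
    case True
    then show ?thesis by (auto simp: linrep_def)
  next
    case False
    then obtain v0 where v0: "v0 \<in> V" by blast
    have "Inl v0 \<in> N" using lv v0 unfolding leaves_def by blast
    define S where "S = (if S0 = [] then [Inl v0] else S0)"
    have S: "is_path N F S" "S \<noteq> []" "{x\<in>N. 2 \<le> degree F x} \<subseteq> set S"
      using S0 \<open>Inl v0 \<in> N\<close> by (auto simp: S_def)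
    have ex: "\<exists>k. k < length S \<and> (p \<in> set S \<longrightarrow> S ! k = p) \<and> (p \<notin> set S \<longrightarrow> {p, S ! k} \<in> F)"
      if pN: "p \<in> N" for p
    proof (cases "p \<in> set S")
      case True
      then show ?thesis by (auto simp: in_set_conv_nth)
    next
      case False
      then obtain y where "y \<in> set S" "{p, y} \<in> F" using attach[OF T S pN False] by blast
      then show ?thesis using False by (auto simp: in_set_conv_nth)
    qed
    define ix where "ix p = (SOME k. k < length S \<and> (p \<in> set S \<longrightarrow> S ! k = p) \<and> (p \<notin> set S \<longrightarrow> {p, S ! k} \<in> F))" for p
    have IX: "\<forall>p\<in>N. ix p < length S \<and> (p \<in> set S \<longrightarrow> S ! ix p = p) \<and> (p \<notin> set S \<longrightarrow> {p, S ! ix p} \<in> F)"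
    proof
      fix p assume "p \<in> N"
      then have "\<exists>k. k < length S \<and> (p \<in> set S \<longrightarrow> S ! k = p) \<and> (p \<notin> set S \<longrightarrow> {p, S ! k} \<in> F)"
        by (rule ex)
      then show "ix p < length S \<and> (p \<in> set S \<longrightarrow> S ! ix p = p) \<and> (p \<notin> set S \<longrightarrow> {p, S ! ix p} \<in> F)"
        unfolding ix_def by (rule someI_ex)
    qed
    have acy: "acyclic_graph N F" using T by (simp add: is_tree_def)
    define x where "x v = pos S w (ix (Inl v))" for v
    define l where "l v = (if Inl v \<in> set S then 0 else w {Inl v, S ! ix (Inl v)})" for v
    have "linrep V E x l"
      unfolding linrep_def
    proof (intro ballI impI)
      fix u v assume uv: "u \<in> V" "v \<in> V" "u \<noteq> v"
      have in': "Inl u \<in> N" "Inl v \<in> N" using lv uv unfolding leaves_def by blast+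
      obtain P where P: "is_path N F P" "P \<noteq> []" "hd P = Inl u" "last P = Inl v"
        "path_weight w P = l u + l v + \<bar>x u - x v\<bar>"
        using spine_paths[OF S(1) W IX in'] uv(3) unfolding l_def x_def by auto
      have "tree_dist N F w (Inl u) (Inl v) = l u + l v + \<bar>x u - x v\<bar>"
        using tree_dist_eq[OF acy P(1,2), of w] P by simp
      then show "({u, v} \<in> E) = (l u + l v + \<bar>x u - x v\<bar> \<le> 1)" using D uv by simp
    qed
    then show ?thesis by blast
  qed
qed

lemma Icc_meet: fixes a b c d :: rat
  assumes "a \<le> b" "c \<le> d"
  shows "{a..b} \<inter> {c..d} \<noteq> {} \<longleftrightarrow> a \<le> d \<and> c \<le> b"
proof
  assume "{a..b} \<inter> {c..d} \<noteq> {}"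
  then show "a \<le> d \<and> c \<le> b" by auto
next
  assume "a \<le> d \<and> c \<le> b"
  then have "max a c \<in> {a..b} \<inter> {c..d}" using assms by auto
  then show "{a..b} \<inter> {c..d} \<noteq> {}" by blast
qed

lemma linrep_bri:
  assumes G: "simple_graph V E" and L: "linrep V E x l"
  shows "blue_red_interval V E"
proof -
  define B where "B = {v\<in>V. l v \<le> 1/2}"
  define lo where "lo v = x v - \<bar>1/2 - l v\<bar>" for v
  define hi where "hi v = x v + \<bar>1/2 - l v\<bar>" for v
  have blo: "lo v = x v - (1/2 - l v)" "hi v = x v + (1/2 - l v)" if "v \<in> B" for v
    using that by (auto simp: B_def lo_def hi_def)
  have rlo: "lo v = x v - (l v - 1/2)" "hi v = x v + (l v - 1/2)" "l v > 1/2" if "v \<in> V" "v \<notin> B" for v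
    using that by (auto simp: B_def lo_def hi_def)
  have lh: "lo v \<le> hi v" for v by (simp add: lo_def hi_def)
  have BB: "{lo u..hi u} \<inter> {lo v..hi v} \<noteq> {} \<longleftrightarrow> l u + l v + \<bar>x u - x v\<bar> \<le> 1"
    if "u \<in> B" "v \<in> B" for u v
  proof -
    have "{lo u..hi u} \<inter> {lo v..hi v} \<noteq> {} \<longleftrightarrow> lo u \<le> hi v \<and> lo v \<le> hi u"
      by (rule Icc_meet[OF lh lh])
    also have "\<dots> \<longleftrightarrow> l u + l v + \<bar>x u - x v\<bar> \<le> 1"
      using blo[OF that(1)] blo[OF that(2)] by (cases "x u \<le> x v") (auto simp: abs_if)
    finally show ?thesis .
  qed
  have RB: "{lo r..hi r} \<subseteq> {lo b..hi b} \<longleftrightarrow> l r + l b + \<bar>x r - x b\<bar> \<le> 1"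
    if "r \<in> V" "r \<notin> B" "b \<in> B" for r b
  proof -
    have "{lo r..hi r} \<subseteq> {lo b..hi b} \<longleftrightarrow> lo b \<le> lo r \<and> hi r \<le> hi b"
      using lh[of r] by simp
    also have "\<dots> \<longleftrightarrow> l r + l b + \<bar>x r - x b\<bar> \<le> 1"
      using rlo[OF that(1,2)] blo[OF that(3)] by (cases "x r \<le> x b") (auto simp: abs_if)
    finally show ?thesis .
  qed
  have RR: "\<not> l u + l v + \<bar>x u - x v\<bar> \<le> 1" if "u \<in> V" "u \<notin> B" "v \<in> V" "v \<notin> B" for u v
    using rlo[OF that(1,2)] rlo[OF that(3,4)] by simp
  have BV: "B \<subseteq> V" by (auto simp: B_def)
  let ?R = "{{b1, b2} | b1 b2. b1 \<in> B \<and> b2 \<in> B \<and> b1 \<noteq> b2 \<and>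
                               {lo b1..hi b1} \<inter> {lo b2..hi b2} \<noteq> {}}
          \<union> {{r, b} | r b. r \<in> V - B \<and> b \<in> B \<and> {lo r..hi r} \<subseteq> {lo b..hi b}}"
  have "E = ?R"
  proof (intro equalityI subsetI)
    fix e assume e: "e \<in> E"
    then obtain u v where uv: "u \<noteq> v" "u \<in> V" "v \<in> V" "e = {u, v}"
      using G unfolding simple_graph_def by blast
    then have d: "l u + l v + \<bar>x u - x v\<bar> \<le> 1" using L e unfolding linrep_def by blast
    have d': "l v + l u + \<bar>x v - x u\<bar> \<le> 1" using d by (simp add: abs_minus_commute)
    show "e \<in> ?R"
    proof (cases "u \<in> B"; cases "v \<in> B")
      assume a: "u \<in> B" "v \<in> B"
      show ?thesis unfolding uv(4)
        by (rule UnI1, rule CollectI, rule exI[of _ u], rule exI[of _ v]) (use a BB[of u v] d uv in auto)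
    next
      assume "u \<in> B" "v \<notin> B"
      then have c: "{lo v..hi v} \<subseteq> {lo u..hi u}" using RB[of v u] d' uv by blast
      show ?thesis unfolding uv(4)
        by (rule UnI2, rule CollectI, rule exI[of _ v], rule exI[of _ u])
          (use c \<open>u \<in> B\<close> \<open>v \<notin> B\<close> uv in \<open>auto simp: insert_commute\<close>)
    next
      assume a: "u \<notin> B" "v \<in> B"
      then have c: "{lo u..hi u} \<subseteq> {lo v..hi v}" using RB[of u v] d uv by blast
      show ?thesis unfolding uv(4)
        by (rule UnI2, rule CollectI, rule exI[of _ u], rule exI[of _ v])
          (use c a uv in auto)
    next
      assume "u \<notin> B" "v \<notin> B"
      then have False using RR[of u v] d uv by blast
      then show ?thesis ..
    qed
  next
    fix e assume "e \<in> ?R"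
    then show "e \<in> E"
    proof
      assume "e \<in> {{b1, b2} | b1 b2. b1 \<in> B \<and> b2 \<in> B \<and> b1 \<noteq> b2 \<and>
                               {lo b1..hi b1} \<inter> {lo b2..hi b2} \<noteq> {}}"
      then obtain b1 b2 where b: "e = {b1, b2}" "b1 \<in> B" "b2 \<in> B" "b1 \<noteq> b2"
        "{lo b1..hi b1} \<inter> {lo b2..hi b2} \<noteq> {}" by blast
      then show "e \<in> E" using BB[of b1 b2] L BV unfolding linrep_def by blast
    next
      assume "e \<in> {{r, b} | r b. r \<in> V - B \<and> b \<in> B \<and> {lo r..hi r} \<subseteq> {lo b..hi b}}"
      then obtain r b where b: "e = {r, b}" "r \<in> V" "r \<notin> B" "b \<in> B"
        "{lo r..hi r} \<subseteq> {lo b..hi b}" by blast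
      then have "r \<noteq> b" by blast
      then show "e \<in> E" using RB[of r b] b L BV unfolding linrep_def by blast
    qed
  qed
  then have fin: "B \<subseteq> V \<and> (\<forall>v\<in>V. lo v \<le> hi v) \<and> E = ?R" using BV lh by blast
  show ?thesis unfolding blue_red_interval_def
    by (rule exI[of _ B], rule exI[of _ lo], rule exI[of _ hi]) (rule fin)
qed



lemma bri_linrep:
  assumes finV: "finite V" and BRI: "blue_red_interval V E"
  shows "\<exists>x l. linrep V E x l \<and> (\<forall>v\<in>V. 0 \<le> l v \<and> l v \<le> 1) \<and> (\<forall>u\<in>V. \<forall>v\<in>V. \<bar>x u - x v\<bar> \<le> 1)"
proof -
  obtain B and lo hi :: "'a \<Rightarrow> rat" where BV: "B \<subseteq> V" and lh: "\<forall>v\<in>V. lo v \<le> hi v" and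
    E: "E = {{b1, b2} | b1 b2. b1 \<in> B \<and> b2 \<in> B \<and> b1 \<noteq> b2 \<and>
                               {lo b1..hi b1} \<inter> {lo b2..hi b2} \<noteq> {}}
          \<union> {{r, b} | r b. r \<in> V - B \<and> b \<in> B \<and> {lo r..hi r} \<subseteq> {lo b..hi b}}"
    using BRI unfolding blue_red_interval_def by blast
  define c where "c v = (lo v + hi v) / 2" for v
  define r where "r v = (hi v - lo v) / 2" for v
  define \<rho> where "\<rho> v = (if v \<in> B then - r v else r v)" for v
  define k where "k u v = \<bar>c u - c v\<bar> + \<rho> u + \<rho> v" for u v
  have r0: "0 \<le> r v" if "v \<in> V" for v using lh that by (simp add: r_def)
  have lohi: "lo v = c v - r v" "hi v = c v + r v" for v by (simp_all add: c_def r_def field_simps)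
  have int: "{lo u..hi u} \<inter> {lo v..hi v} \<noteq> {} \<longleftrightarrow> k u v \<le> 0" if "u \<in> B" "v \<in> B" for u v
  proof -
    have "{lo u..hi u} \<inter> {lo v..hi v} \<noteq> {} \<longleftrightarrow> lo u \<le> hi v \<and> lo v \<le> hi u"
      using lh that BV by (intro Icc_meet) auto
    also have "\<dots> \<longleftrightarrow> k u v \<le> 0" using that unfolding k_def \<rho>_def lohi
      by (cases "c u \<le> c v") (auto simp: abs_if)
    finally show ?thesis .
  qed
  have sub: "{lo u..hi u} \<subseteq> {lo v..hi v} \<longleftrightarrow> k u v \<le> 0" if "u \<in> V" "u \<notin> B" "v \<in> B" for u v
  proof -
    have "{lo u..hi u} \<subseteq> {lo v..hi v} \<longleftrightarrow> lo v \<le> lo u \<and> hi u \<le> hi v"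
      using lh that by simp
    also have "\<dots> \<longleftrightarrow> k u v \<le> 0" using that unfolding k_def \<rho>_def lohi
      by (cases "c u \<le> c v") (auto simp: abs_if)
    finally show ?thesis .
  qed
  have ksym: "k u v = k v u" for u v by (simp add: k_def abs_minus_commute)
  have adj: "{u, v} \<in> E \<longleftrightarrow> (u \<in> B \<or> v \<in> B) \<and> k u v \<le> 0"
    if uv: "u \<in> V" "v \<in> V" "u \<noteq> v" for u v
  proof -
    have "{u, v} \<in> E \<longleftrightarrow> (u \<in> B \<and> v \<in> B \<and> {lo u..hi u} \<inter> {lo v..hi v} \<noteq> {})
       \<or> (u \<notin> B \<and> v \<in> B \<and> {lo u..hi u} \<subseteq> {lo v..hi v})
       \<or> (v \<notin> B \<and> u \<in> B \<and> {lo v..hi v} \<subseteq> {lo u..hi u})"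
      unfolding E using uv by (auto simp: doubleton_eq_iff Int_commute)
    also have "\<dots> \<longleftrightarrow> (u \<in> B \<or> v \<in> B) \<and> k u v \<le> 0"
      using int[of u v] sub[of u v] sub[of v u] uv ksym[of u v] by auto
    finally show ?thesis .
  qed
  define M where "M = 1 + (\<Sum>v\<in>V. \<bar>c v\<bar> + r v)"
  have Mb: "\<bar>c v\<bar> + r v \<le> M - 1" if "v \<in> V" for v
  proof -
    have "\<bar>c v\<bar> + r v \<le> (\<Sum>v\<in>V. \<bar>c v\<bar> + r v)"
      by (rule member_le_sum[where f = "\<lambda>v. \<bar>c v\<bar> + r v"]) (use that finV r0 in auto)
    then show ?thesis unfolding M_def by simp
  qed
  have M1: "1 \<le> M" unfolding M_def using r0 by (simp add: sum_nonneg)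
  define lam where "lam = 1 / (4 * M)"
  have lam0: "0 < lam" using M1 by (simp add: lam_def)
  have lamM: "lam * M = 1/4" using M1 by (simp add: lam_def)
  define K where "K = {k u v | u v. u \<in> V \<and> v \<in> V \<and> 0 < k u v}"
  have finK: "finite K"
  proof -
    have "K \<subseteq> (\<lambda>(u, v). k u v) ` (V \<times> V)" unfolding K_def by auto
    then show ?thesis using finV by (meson finite_SigmaI finite_imageI rev_finite_subset)
  qed
  define \<delta> where "\<delta> = Min (insert 1 K)"
  have d0: "0 < \<delta>" unfolding \<delta>_def using finK by (auto simp: K_def)
  have d1: "\<delta> \<le> 1" unfolding \<delta>_def using finK by simp
  have dk: "\<delta> \<le> k u v" if "u \<in> V" "v \<in> V" "0 < k u v" for u v
    unfolding \<delta>_def using finK that by (auto simp: K_def intro: Min_le)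
  define \<eta> where "\<eta> = lam * \<delta> / 4"
  define \<sigma> :: "'a \<Rightarrow> rat" where "\<sigma> v = (if v \<in> B then -1 else 1)" for v
  define x where "x v = lam * c v" for v
  define l where "l v = 1/2 + lam * \<rho> v + \<sigma> v * \<eta>" for v
  have e0: "0 < \<eta>" using lam0 d0 by (simp add: \<eta>_def)
  have e1: "\<eta> \<le> 1/16"
  proof -
    have "lam \<le> 1/4" using M1 lam0 lamM by (metis mult_le_cancel_left1 order_less_imp_not_less)
    then have "lam * \<delta> \<le> 1/4 * 1" using d0 d1 lam0 by (intro mult_mono) auto
    then show ?thesis unfolding \<eta>_def by linarith
  qed
  have sumf: "l u + l v + \<bar>x u - x v\<bar> = 1 + lam * k u v + (\<sigma> u + \<sigma> v) * \<eta>" for u v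
  proof -
    have "\<bar>x u - x v\<bar> = lam * \<bar>c u - c v\<bar>"
      using lam0 by (simp add: x_def abs_mult right_diff_distrib[symmetric])
    then show ?thesis by (simp add: l_def k_def algebra_simps)
  qed
  have lin: "linrep V E x l" unfolding linrep_def
  proof (intro ballI impI)
    fix u v assume uv: "u \<in> V" "v \<in> V" "u \<noteq> v"
    have pos_iff: "lam * k u v \<le> 0 \<longleftrightarrow> k u v \<le> 0" using lam0 by (simp add: mult_le_0_iff)
    show "({u, v} \<in> E) = (l u + l v + \<bar>x u - x v\<bar> \<le> 1)"
    proof (cases "u \<in> B"; cases "v \<in> B")
      assume a: "u \<in> B" "v \<in> B"
      have "k u v \<le> 0 \<longleftrightarrow> lam * k u v - 2 * \<eta> \<le> 0"
      proof
        assume "k u v \<le> 0" then show "lam * k u v - 2 * \<eta> \<le> 0" using pos_iff e0 by linarith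
      next
        assume h: "lam * k u v - 2 * \<eta> \<le> 0"
        show "k u v \<le> 0"
        proof (rule ccontr)
          assume "\<not> k u v \<le> 0"
          then have "\<delta> \<le> k u v" using dk uv by simp
          then have "lam * \<delta> \<le> lam * k u v" using lam0 by simp
          then show False using h e0 unfolding \<eta>_def by linarith
        qed
      qed
      then show ?thesis using adj[OF uv] a sumf[of u v] by (simp add: \<sigma>_def)
    next
      assume a: "u \<in> B" "v \<notin> B"
      then show ?thesis using adj[OF uv] sumf[of u v] pos_iff by (simp add: \<sigma>_def)
    next
      assume a: "u \<notin> B" "v \<in> B"
      then show ?thesis using adj[OF uv] sumf[of u v] pos_iff by (simp add: \<sigma>_def)
    next
      assume a: "u \<notin> B" "v \<notin> B"
      have "0 \<le> k u v" using a r0 uv by (simp add: k_def \<rho>_def)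
      then have "0 \<le> lam * k u v" using lam0 by simp
      then show ?thesis using adj[OF uv] a sumf[of u v] e0 by (simp add: \<sigma>_def)
    qed
  qed
  have lb: "0 \<le> l v \<and> l v \<le> 1" if "v \<in> V" for v
  proof -
    have "\<bar>\<rho> v\<bar> \<le> M" using Mb[OF that] r0[OF that] by (simp add: \<rho>_def)
    then have "lam * \<bar>\<rho> v\<bar> \<le> lam * M" using lam0 by simp
    then have "\<bar>lam * \<rho> v\<bar> \<le> 1/4" using lamM lam0 by (simp add: abs_mult)
    moreover have "\<bar>\<sigma> v * \<eta>\<bar> \<le> 1/16" using e0 e1 by (simp add: \<sigma>_def)
    ultimately show ?thesis unfolding l_def by (simp add: abs_le_iff) linarith
  qed
  have xb: "\<bar>x u - x v\<bar> \<le> 1" if "u \<in> V" "v \<in> V" for u v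
  proof -
    have "\<bar>c u - c v\<bar> \<le> 2 * M" using Mb[OF that(1)] Mb[OF that(2)] r0[OF that(1)] r0[OF that(2)]
      by (simp add: abs_le_iff) linarith
    then have "lam * \<bar>c u - c v\<bar> \<le> lam * (2 * M)" using lam0 by simp
    then have "lam * \<bar>c u - c v\<bar> \<le> 1/2" using lamM by simp
    then show ?thesis using lam0 by (simp add: x_def abs_mult right_diff_distrib[symmetric])
  qed
  show ?thesis using lin lb xb by blast
qed



lemma linrep_llp_small:
  assumes finV: "finite V" and c1: "card V \<le> 1"
  shows "linear_leaf_power V E"
proof -
  have one: "\<forall>a\<in>V. \<forall>b\<in>V. a = b" using finV c1 card_le_Suc0_iff_eq by auto
  define N :: "('a + nat) set" where "N = Inl ` V"
  define F :: "('a + nat) set set" where "F = {}"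
  define w :: "('a + nat) set \<Rightarrow> rat" where "w e = 0" for e
  have deg: "degree F z = 0" for z by (simp add: degree_def F_def)
  have T: "is_tree N F"
    unfolding is_tree_def
  proof (intro conjI)
    show "finite N" using finV by (simp add: N_def)
    show "simple_graph N F" by (simp add: simple_graph_def F_def)
    show "connected_graph N F" unfolding connected_graph_def
    proof (intro ballI)
      fix p q assume "p \<in> N" "q \<in> N"
      then obtain a b where ab: "p = Inl a" "q = Inl b" "a \<in> V" "b \<in> V" by (auto simp: N_def)
      then have "a = b" using one by blast
      then have "p = q" using ab by simp
      then show "\<exists>xs. is_path N F xs \<and> xs \<noteq> [] \<and> hd xs = p \<and> last xs = q"
        using \<open>p \<in> N\<close> by (intro exI[of _ "[p]"]) simp
    qed
    show "acyclic_graph N F" by (rule acyclic_by_height[where h = "\<lambda>_. 0"]) (simp add: F_def)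
  qed
  have lv: "leaves N F = Inl ` V" by (simp add: leaves_def deg N_def)
  have nd: "\<forall>u\<in>V. \<forall>v\<in>V. u \<noteq> v \<longrightarrow> ({u, v} \<in> E \<longleftrightarrow> tree_dist N F w (Inl u) (Inl v) \<le> 1)"
    using one by blast
  have "leaf_root V E N F w"
    unfolding leaf_root_def using T lv nd by (simp add: F_def)
  moreover have "caterpillar N F"
    unfolding caterpillar_def using T by (intro conjI exI[of _ "[]"]) (auto simp: deg)
  ultimately show ?thesis unfolding linear_leaf_power_def by blast
qed

lemma linrep_llp_big:
  fixes V :: "'a set" and x l :: "'a \<Rightarrow> rat"
  assumes finV: "finite V" and c2: "2 \<le> card V" and L: "linrep V E x l"
    and lb: "\<forall>v\<in>V. 0 \<le> l v \<and> l v \<le> 1" and xb: "\<forall>u\<in>V. \<forall>v\<in>V. \<bar>x u - x v\<bar> \<le> 1"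
  shows "linear_leaf_power V E"
proof -
  obtain vs0 where vs0: "set vs0 = V" "distinct vs0" using finite_distinct_list[OF finV] by blast
  define vs where "vs = sort_key x vs0"
  have vs: "set vs = V" "distinct vs" "sorted (map x vs)" using vs0 by (simp_all add: vs_def)
  define n where "n = length vs"
  have n2: "2 \<le> n" using c2 vs distinct_card by (metis n_def)
  define X where "X i = x (vs ! i)" for i
  have Xmono: "X i \<le> X j" if "i \<le> j" "j < n" for i j
    using sorted_nth_mono[OF vs(3), of i j] that by (simp add: X_def n_def)
  have vsV: "vs ! i \<in> V" if "i < n" for i using that vs(1) by (auto simp: n_def)
  define N :: "('a + nat) set" where "N = Inl ` V \<union> Inr ` {..<n}"
  define F :: "('a + nat) set set" where
    "F = (\<lambda>i. {Inl (vs ! i), Inr i}) ` {..<n} \<union> (\<lambda>i. {Inr i, Inr (Suc i)}) ` {i. Suc i < n}"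
  define w :: "('a + nat) set \<Rightarrow> rat" where
    "w e = (if \<exists>v. Inl v \<in> e then l (SOME v. Inl v \<in> e)
            else X (Max {i. Inr i \<in> e}) - X (Min {i. Inr i \<in> e}))" for e
  define S :: "('a + nat) list" where "S = map Inr [0..<n]"
  define ix :: "'a + nat \<Rightarrow> nat" where
    "ix p = (case p of Inl v \<Rightarrow> (SOME i. i < n \<and> vs ! i = v) | Inr i \<Rightarrow> i)" for p
  have w1: "w {Inl v, Inr i} = l v" for v i by (simp add: w_def)
  have w2: "w {Inr i, Inr (Suc i)} = X (Suc i) - X i" for i
  proof -
    have "{j. Inr j \<in> {Inr i, Inr (Suc i) :: 'a + nat}} = {i, Suc i}" by auto
    then show ?thesis by (simp add: w_def)
  qed
  have ixv: "ix (Inl v) < n \<and> vs ! ix (Inl v) = v" if "v \<in> V" for v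
  proof -
    have "\<exists>i. i < n \<and> vs ! i = v" using that vs(1) by (auto simp: n_def in_set_conv_nth)
    then have "(SOME i. i < n \<and> vs ! i = v) < n \<and> vs ! (SOME i. i < n \<and> vs ! i = v) = v"
      by (rule someI_ex)
    then show ?thesis by (simp add: ix_def)
  qed
  have ixu: "i = ix (Inl v)" if "i < n" "vs ! i = v" for i v
  proof -
    have "v \<in> V" using that vsV by auto
    then show ?thesis using ixv[of v] that vs(2) nth_eq_iff_index_eq by (fastforce simp: n_def)
  qed
  have "finite {i. Suc i < n}" by (rule finite_subset[of _ "{..<n}"]) auto
  then have finF: "finite F" by (simp add: F_def)
  have W: "\<forall>e\<in>F. 0 \<le> w e \<and> w e \<le> 1"
  proof
    fix e assume "e \<in> F"
    then consider (a) i where "i < n" "e = {Inl (vs ! i), Inr i}" | (b) i where "Suc i < n" "e = {Inr i, Inr (Suc i)}"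
      unfolding F_def by blast
    then show "0 \<le> w e \<and> w e \<le> 1"
    proof cases
      case a then show ?thesis using lb vsV w1 by auto
    next
      case b
      have "X i \<le> X (Suc i)" using Xmono b by simp
      moreover have "\<bar>X (Suc i) - X i\<bar> \<le> 1" using xb vsV b by (simp add: X_def)
      ultimately show ?thesis using b w2 by simp
    qed
  qed
  have SN: "set S \<subseteq> N" by (auto simp: S_def N_def)
  have pS: "is_path N F S" unfolding is_path_def
  proof (intro conjI allI impI)
    show "distinct S" by (simp add: S_def distinct_map)
    show "set S \<subseteq> N" by (rule SN)
    fix i assume "Suc i < length S"
    then show "{S ! i, S ! Suc i} \<in> F" by (auto simp: S_def F_def)
  qed
  have IX: "\<forall>p\<in>N. ix p < length S \<and> (p \<in> set S \<longrightarrow> S ! ix p = p) \<and> (p \<notin> set S \<longrightarrow> {p, S ! ix p} \<in> F)"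
  proof
    fix p assume "p \<in> N"
    then consider (a) v where "v \<in> V" "p = Inl v" | (b) i where "i < n" "p = Inr i" unfolding N_def by blast
    then show "ix p < length S \<and> (p \<in> set S \<longrightarrow> S ! ix p = p) \<and> (p \<notin> set S \<longrightarrow> {p, S ! ix p} \<in> F)"
    proof cases
      case a
      have "ix (Inl v) < n" using ixv[OF a(1)] by simp
      then have "{Inl (vs ! ix (Inl v)), Inr (ix (Inl v))} \<in> F" unfolding F_def by blast
      then show ?thesis using a ixv[OF a(1)] by (auto simp: S_def)
    next
      case b then show ?thesis by (auto simp: S_def ix_def)
    qed
  qed
  have W0: "\<forall>e\<in>F. 0 \<le> w e" using W by blast
  have degl: "degree F (Inl v) \<le> 1" if "v \<in> V" for v
  proof -
    have "{e \<in> F. Inl v \<in> e} \<subseteq> {{Inl v, Inr (ix (Inl v))}}"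
      using ixu by (auto simp: F_def)
    then have "card {e \<in> F. Inl v \<in> e} \<le> card {{Inl v, Inr (ix (Inl v))}}"
      by (intro card_mono) auto
    then show ?thesis by (simp add: degree_def)
  qed
  have degr: "2 \<le> degree F (Inr i)" if "i < n" for i
  proof (cases "Suc i < n")
    case True
    have "{Inr i, Inl (vs ! i)} \<in> F" "{Inr i, Inr (Suc i)} \<in> F" using that True
      by (auto simp: F_def insert_commute)
    then show ?thesis using degree_ge2[OF finF] by blast
  next
    case False
    then obtain j where j: "i = Suc j" using n2 that by (cases i) auto
    have "{Inr i, Inl (vs ! i)} \<in> F" "{Inr i, Inr j} \<in> F" using that j
      by (auto simp: F_def insert_commute)
    then show ?thesis using degree_ge2[OF finF] by blast
  qed
  have lv: "leaves N F = Inl ` V"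
  proof
    show "leaves N F \<subseteq> Inl ` V"
      using degr by (fastforce simp: leaves_def N_def)
    show "Inl ` V \<subseteq> leaves N F"
      using degl by (auto simp: leaves_def N_def)
  qed
  have acy: "acyclic_graph N F"
  proof (rule acyclic_by_height[where h = "\<lambda>p. case p of Inl _ \<Rightarrow> n | Inr i \<Rightarrow> i"])
    fix z y1 y2 :: "'a + nat"
    let ?h = "\<lambda>p. case p of Inl _ \<Rightarrow> n | Inr i \<Rightarrow> i"
    have nb: "(\<exists>i. z = Inr (Suc i) \<and> y = Inr i) \<or> (\<exists>v j. z = Inl v \<and> j < n \<and> vs ! j = v \<and> y = Inr j)"
      if e: "{z, y} \<in> F" and hh: "?h y \<le> ?h z" for y
    proof -
      from e consider (a) i where "i < n" "{z, y} = {Inl (vs ! i), Inr i}"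
        | (b) i where "Suc i < n" "{z, y} = {Inr i, Inr (Suc i)}" unfolding F_def by blast
      then show ?thesis
      proof cases
        case a
        then have "(z = Inl (vs ! i) \<and> y = Inr i) \<or> (z = Inr i \<and> y = Inl (vs ! i))"
          by (simp add: doubleton_eq_iff)
        then show ?thesis using a hh by auto
      next
        case b
        then have "(z = Inr i \<and> y = Inr (Suc i)) \<or> (z = Inr (Suc i) \<and> y = Inr i)"
          by (simp add: doubleton_eq_iff)
        then show ?thesis using hh by auto
      qed
    qed
    assume "{z, y1} \<in> F" "{z, y2} \<in> F" "?h y1 \<le> ?h z" "?h y2 \<le> ?h z"
    then have "(\<exists>i. z = Inr (Suc i) \<and> y1 = Inr i) \<or> (\<exists>v j. z = Inl v \<and> j < n \<and> vs ! j = v \<and> y1 = Inr j)"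
      "(\<exists>i. z = Inr (Suc i) \<and> y2 = Inr i) \<or> (\<exists>v j. z = Inl v \<and> j < n \<and> vs ! j = v \<and> y2 = Inr j)"
      using nb by blast+
    then show "y1 = y2" using ixu by (auto simp: vs(2) n_def nth_eq_iff_index_eq)
  qed
  have conn: "connected_graph N F" unfolding connected_graph_def
  proof (intro ballI)
    fix p q assume pq: "p \<in> N" "q \<in> N"
    show "\<exists>xs. is_path N F xs \<and> xs \<noteq> [] \<and> hd xs = p \<and> last xs = q"
    proof (cases "p = q")
      case True then show ?thesis using pq by (intro exI[of _ "[p]"]) simp
    next
      case False then show ?thesis using spine_paths[OF pS W0 IX pq False] by blast
    qed
  qed
  have T: "is_tree N F"
    unfolding is_tree_def
  proof (intro conjI)
    show "finite N" using finV by (simp add: N_def)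
    show "simple_graph N F" unfolding simple_graph_def
    proof
      fix e assume "e \<in> F"
      then consider (a) i where "i < n" "e = {Inl (vs ! i), Inr i}"
        | (b) i where "Suc i < n" "e = {Inr i, Inr (Suc i)}" unfolding F_def by blast
      then show "\<exists>u v. u \<noteq> v \<and> u \<in> N \<and> v \<in> N \<and> e = {u, v}"
      proof cases
        case a
        then show ?thesis using vsV[OF a(1)]
          by (intro exI[of _ "Inl (vs ! i)"] exI[of _ "Inr i"]) (auto simp: N_def)
      next
        case b
        then show ?thesis
          by (intro exI[of _ "Inr i"] exI[of _ "Inr (Suc i)"]) (auto simp: N_def)
      qed
    qed
    show "connected_graph N F" by (rule conn)
    show "acyclic_graph N F" by (rule acy)
  qed
  have posS: "pos S w k = X k - X 0" if "k < n" for k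
    using that
  proof (induction k)
    case 0
    then show ?case using n2 by (simp add: pos_0 S_def)
  next
    case (Suc k)
    have lenS: "length S = n" by (simp add: S_def)
    have "take (Suc (Suc k)) S = take (Suc k) S @ [Inr (Suc k)]"
      using Suc.prems by (simp add: take_Suc_conv_app_nth lenS S_def)
    moreover have "last (take (Suc k) S) = Inr k"
      using Suc.prems by (simp add: take_Suc_conv_app_nth lenS S_def)
    moreover have "take (Suc k) S \<noteq> []" using Suc.prems n2 by (simp add: lenS S_def)
    ultimately have "pos S w (Suc k) = pos S w k + w {Inr k, Inr (Suc k)}"
      unfolding pos_def using pw_append[of "take (Suc k) S" "[Inr (Suc k)]" w] by simp
    then show ?case using Suc w2 by simp
  qed
  have dist: "\<forall>u\<in>V. \<forall>v\<in>V. u \<noteq> v \<longrightarrow> ({u, v} \<in> E \<longleftrightarrow> tree_dist N F w (Inl u) (Inl v) \<le> 1)"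
  proof (intro ballI impI)
    fix u v assume uv: "u \<in> V" "v \<in> V" "u \<noteq> v"
    have in': "Inl u \<in> N" "Inl v \<in> N" using uv by (auto simp: N_def)
    have nS: "Inl u \<notin> set S" "Inl v \<notin> set S" by (auto simp: S_def)
    have Si: "S ! ix (Inl u) = Inr (ix (Inl u))" "S ! ix (Inl v) = Inr (ix (Inl v))"
      using ixv uv by (auto simp: S_def)
    obtain P where P: "is_path N F P" "P \<noteq> []" "hd P = Inl u" "last P = Inl v"
      "path_weight w P = w {Inl u, S ! ix (Inl u)} + w {Inl v, S ! ix (Inl v)}
        + \<bar>pos S w (ix (Inl u)) - pos S w (ix (Inl v))\<bar>"
      using spine_paths[OF pS W0 IX in'] uv(3) nS by auto
    have "path_weight w P = l u + l v + \<bar>x u - x v\<bar>"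
      using P(5) Si w1 posS ixv uv by (simp add: X_def)
    then have "tree_dist N F w (Inl u) (Inl v) = l u + l v + \<bar>x u - x v\<bar>"
      using tree_dist_eq[OF acy P(1,2), of w] P by simp
    then show "({u, v} \<in> E) = (tree_dist N F w (Inl u) (Inl v) \<le> 1)"
      using L uv unfolding linrep_def by simp
  qed
  have "leaf_root V E N F w" unfolding leaf_root_def using T lv W dist by blast
  moreover have "caterpillar N F" unfolding caterpillar_def
  proof (intro conjI exI[of _ S])
    show "is_tree N F" by (rule T)
    show "is_path N F S" by (rule pS)
    show "{x \<in> N. 2 \<le> degree F x} \<subseteq> set S"
      using degl by (force simp: N_def S_def)
  qed
  ultimately show ?thesis unfolding linear_leaf_power_def by blast
qed

theorem theorem1:
  fixes V :: "'a set" and E :: "'a set set"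
  assumes "finite V" and "simple_graph V E"
  shows "blue_red_interval V E \<longleftrightarrow> linear_leaf_power V E"
proof
  assume "blue_red_interval V E"
  then obtain x l where L: "linrep V E x l" "\<forall>v\<in>V. 0 \<le> l v \<and> l v \<le> 1"
    "\<forall>u\<in>V. \<forall>v\<in>V. \<bar>x u - x v\<bar> \<le> 1"
    using bri_linrep[OF assms(1)] by blast
  show "linear_leaf_power V E"
  proof (cases "card V \<le> 1")
    case True
    then show ?thesis using linrep_llp_small[OF assms(1)] by blast
  next
    case False
    then show ?thesis using linrep_llp_big[OF assms(1) _ L] by simp
  qed
next
  assume "linear_leaf_power V E"
  then obtain x l where "linrep V E x l" using llp_linrep by blast
  then show "blue_red_interval V E" using linrep_bri[OF assms(2)] by blast
qed

end
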